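(* Let $(n,s,L)$ be a tree with $n\notin L$, and let $\{k_1<k_2<\dots<k_m\}=s^{-1}(n)$; put $k_0=0$. Then $k_m=n-1$. Moreover, putting $n_i=k_i-k_{i-1}$ for $i=1,\dots,m$, the triples $(n_i,s_i,L_i)$ are trees, where $s_i(j)=s(j+k_{i-1})-k_{i-1}$ for $j\in\{1,\dots,n_i-1\}$ and $L_i=\{x-k_{i-1}\mid x\in L\}\cap\{1,\dots,n_i\}$.
   Context: For $n\ge1$ write $\underline n=\{1,\dots,n\}$. A tree $(n,s,L)$ consists of a subset $L\subseteq\underline n$ (the leaves) and a map $s:\underline{n-1}\to\underline n\setminus L$ such that (1) $s(x)>x$ for all $x$, and (2) $x\le y<s(x)$ implies $s(y)\le s(x)$. *)

theory Defs
  imports Main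
begin

definition is_tree :: "nat \<Rightarrow> (nat \<Rightarrow> nat) \<Rightarrow> nat set \<Rightarrow> bool" where
  "is_tree n s L \<longleftrightarrow> n \<ge> 1 \<and> L \<subseteq> {1..n} \<and>
     (\<forall>x\<in>{1..n-1}. s x \<in> {1..n} - L) \<and>
     (\<forall>x\<in>{1..n-1}. s x > x) \<and>
     (\<forall>x\<in>{1..n-1}. \<forall>y\<in>{1..n-1}. x \<le> y \<and> y < s x \<longrightarrow> s y \<le> s x)"

end

theory Submission
  imports Defs
begin

lemma idx_less:
  assumes "sorted_wrt (<) (K::nat list)" "p < length K" "q < length K" "K!p < K!q"
  shows "p < q"
proof (rule ccontr)
  assume "\<not> p < q"
  hence "q = p \<or> q < p" by auto
  thus False using assms sorted_wrt_nth_less[OF assms(1)] by (metis less_asym less_irrefl)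
qed

theorem lemma3:
  fixes n :: nat and s :: "nat \<Rightarrow> nat" and L :: "nat set" and ks :: "nat list"
  assumes "is_tree n s L"
    and "n \<notin> L"
    and "sorted_wrt (<) ks"
    and "set ks = {x \<in> {1..n-1}. s x = n}"
  shows "(0 # ks) ! length ks = n - 1
    \<and> (\<forall>i\<in>{1..length ks}.
         is_tree ((0 # ks) ! i - (0 # ks) ! (i - 1))
                 (\<lambda>j. s (j + (0 # ks) ! (i - 1)) - (0 # ks) ! (i - 1))
                 ({x - (0 # ks) ! (i - 1) | x. x \<in> L} \<inter> {1..(0 # ks) ! i - (0 # ks) ! (i - 1)}))"
proof -
  define K where "K = 0 # ks"
  have T: "n \<ge> 1" "L \<subseteq> {1..n}" "\<And>x. x\<in>{1..n-1} \<Longrightarrow> s x \<in> {1..n} - L"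
    "\<And>x. x\<in>{1..n-1} \<Longrightarrow> s x > x"
    "\<And>x y. x\<in>{1..n-1} \<Longrightarrow> y\<in>{1..n-1} \<Longrightarrow> x \<le> y \<Longrightarrow> y < s x \<Longrightarrow> s y \<le> s x"
    using assms(1) unfolding is_tree_def by auto
  have ks1: "\<forall>x\<in>set ks. 0 < x" using assms(4) by auto
  have SK: "sorted_wrt (<) K" unfolding K_def using assms(3) ks1 by simp
  have part1: "K ! length ks = n - 1"
  proof (cases "n = 1")
    case True
    then have "ks = []" using assms(4) by auto
    then show ?thesis using True K_def by simp
  next
    case False
    then have n2: "n \<ge> 2" using T(1) by auto
    have "s (n-1) > n-1" "s (n-1) \<le> n" using T(3)[of "n-1"] T(4)[of "n-1"] n2 by auto
    hence "s (n-1) = n" by auto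
    hence mem: "n-1 \<in> set ks" using assms(4) n2 by auto
    then obtain p where p: "p < length ks" "ks!p = n-1" by (metis in_set_conv_nth)
    have "p = length ks - 1"
    proof (rule ccontr)
      assume "p \<noteq> length ks - 1"
      hence "p < length ks - 1" using p by auto
      hence "ks!p < ks!(length ks - 1)" using sorted_wrt_nth_less[OF assms(3), of p "length ks - 1"] p by linarith
      moreover have "ks!(length ks - 1) \<in> set ks" using p by auto
      ultimately show False using assms(4) p by auto
    qed
    then show ?thesis using p K_def by (cases ks) auto
  qed
  have part2: "is_tree (K ! i - K ! (i - 1)) (\<lambda>j. s (j + K ! (i - 1)) - K ! (i - 1))
        ({x - K ! (i - 1) | x. x \<in> L} \<inter> {1..K ! i - K ! (i - 1)})"
    if i: "i \<in> {1..length ks}" for i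
  proof -
    define a where "a = K!(i-1)"
    define b where "b = K!i"
    have lenK: "length K = length ks + 1" unfolding K_def by simp
    have ab: "a < b" unfolding a_def b_def using sorted_wrt_nth_less[OF SK, of "i-1" i] i lenK by auto
    have bks: "b \<in> set ks" unfolding b_def K_def using i by (cases i) auto
    hence bn: "b \<in> {1..n-1}" "s b = n" using assms(4) by auto
    have notks: "x \<notin> set ks" if "a < x" "x < b" for x
    proof
      assume "x \<in> set ks"
      then obtain p where p: "p < length ks" "ks!p = x" by (metis in_set_conv_nth)
      have kp: "K!(Suc p) = x" "Suc p < length K" using p K_def lenK by auto
      have "i-1 < Suc p" using idx_less[OF SK, of "i-1" "Suc p"] kp that a_def i lenK by auto
      moreover have "Suc p < i" using idx_less[OF SK, of "Suc p" i] kp that b_def i lenK by auto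
      ultimately show False by auto
    qed
    have sx: "s x \<le> b" "s x > x" "s x \<in> {1..n} - L" if "a < x" "x < b" for x
    proof -
      have xr: "x \<in> {1..n-1}" using that bn by auto
      have "s x \<noteq> n" using notks[OF that] assms(4) xr by auto
      moreover have "s x \<le> n" using T(3)[OF xr] by auto
      moreover have "\<not> s x > b" using T(5)[OF xr bn(1)] that bn(2) \<open>s x \<le> n\<close> \<open>s x \<noteq> n\<close> by auto
      ultimately show "s x \<le> b" by auto
      show "s x > x" using T(4)[OF xr] .
      show "s x \<in> {1..n} - L" using T(3)[OF xr] .
    qed
    show ?thesis
      unfolding is_tree_def a_def[symmetric] b_def[symmetric]
    proof (intro conjI ballI impI)
      show "1 \<le> b - a" using ab by auto
      show "{x - a |x. x \<in> L} \<inter> {1..b - a} \<subseteq> {1..b - a}" by auto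
    next
      fix j assume j: "j \<in> {1..b - a - 1}"
      hence j': "a < j + a" "j + a < b" by auto
      show "s (j + a) - a > j" using sx(2)[OF j'] by auto
      have "s (j+a) - a \<in> {1..b-a}" using sx(1,2)[OF j'] by auto
      moreover have "s (j+a) - a \<notin> {x - a |x. x \<in> L}"
      proof
        assume "s (j+a) - a \<in> {x - a |x. x \<in> L}"
        then obtain y where y: "y \<in> L" "s (j+a) - a = y - a" by auto
        have "s (j+a) > a" using sx(2)[OF j'] by auto
        hence "y = s (j+a)" using y(2) by auto
        thus False using y(1) sx(3)[OF j'] by auto
      qed
      ultimately show "s (j + a) - a \<in> {1..b - a} - {x - a |x. x \<in> L} \<inter> {1..b - a}" by auto
    next
      fix j j' assume j: "j \<in> {1..b - a - 1}" and jj: "j' \<in> {1..b - a - 1}"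
        and le: "j \<le> j' \<and> j' < s (j + a) - a"
      have j1: "a < j + a" "j + a < b" using j by auto
      have j2: "a < j' + a" "j' + a < b" using jj by auto
      have r1: "j + a \<in> {1..n-1}" "j' + a \<in> {1..n-1}" using j1 j2 bn by auto
      have "s (j'+a) \<le> s (j+a)" using T(5)[OF r1] le by auto
      thus "s (j' + a) - a \<le> s (j + a) - a" by auto
    qed
  qed
  show ?thesis using part1 part2 unfolding K_def by blast
qed

end
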